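(* Let $(T,f,(\le_h))$ be an ordered merge tree, let $\tau\colon[0,1]\to T$ be a partial in-order curve (in particular, any in-order curve) on $T$, and let $t_1\le t_2$ in $[0,1]$. Then $\tau(t)\in T_x$ for all $t\in[t_1,t_2]$, where $x=\mathrm{lca}(\tau(t_1),\tau(t_2))$.
   Context: A merge tree $(T,f)$: a finite rooted tree $T$ identified with its topological realisation (edges are copies of $[0,1]$), with a continuous $f\colon T\to\mathbb{R}\cup\{\infty\}$ strictly increasing towards the root, $f(v)=\infty$ iff $v$ is the root; lowest leaf at height $0$. $x_1\preceq x_2$ iff there is an $f$-increasing path from $x_1$ to $x_2$; $T_x$ is the subtree of descendants of $x$; $\mathrm{lca}$ the lowest common ancestor; $\mathrm{anc}_h(x)$ the unique ancestor of $x$ at height $h$; $\mathbb{L}_h=\{x:f(x)=h\}$. A layer-order is a family $(\le_h)_{h\ge0}$ of total orders on the $\mathbb{L}_h$ that is consistent ($h_1\le h_2$, $x_1\le_{h_1}x_2$ imply $\mathrm{anc}_{h_2}(x_1)\le_{h_2}\mathrm{anc}_{h_2}(x_2)$); $(T,f,(\le_h))$ is an ordered merge tree. For a curve $\sigma\colon[0,1]\to T$, the number of times $\sigma$ visits $x$ is the number of connected components of $\sigma^{-1}(x)$. $\deg(x)$ is the down-degree of $x$ ($1$ for edge-interior points, $0$ for leaves). For a vertex $v$ and a strict ancestor $x$ of $v$ on the parent edge of $v$ (possibly its upper endpoint), the planted subtree is $T_{x,v}=T_v\cup[x,v]$ with root $x$; it is $\sigma$-unvisited if all its points except possibly $x$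 are unvisited by $\sigma$; the $\sigma$-unvisited degree of $x$ is the number of $\sigma$-unvisited planted subtrees rooted at $x$. A curve $\tau\colon[0,1]\to T$ starting and ending at the root is a partial in-order curve if (1) for all $t_1,t_2$ with $f(\tau(t_1))=f(\tau(t_2))=h$ and $\tau(t_1)<_h\tau(t_2)$ we have $t_1<t_2$, and (2) each $x\in T$ is visited exactly $\deg(x)+1-\kappa$ times, where $\kappa$ is the $\tau$-unvisited degree of $x$. It is an in-order curve if moreover each $x$ is visited exactly $\deg(x)+1$ times. *)

theory Defs
  imports "HOL-Analysis.Analysis"
begin

definition rooted_tree :: "'v::finite \<Rightarrow> ('v \<Rightarrow> 'v) \<Rightarrow> bool" where
  "rooted_tree r par \<longleftrightarrow> par r = r \<and> (\<forall>v. \<exists>n. (par ^^ n) v = r)"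

definition sanc :: "('v \<Rightarrow> 'v) \<Rightarrow> 'v \<Rightarrow> 'v set" where
  "sanc par u = {(par ^^ n) u | n. n \<ge> 1}"

text \<open>Geometric realisation in real^'v: the point at parameter s in [0,1] of the edge
from u (s = 0) to par u (s = 1). Coordinate w records which fraction of the edge
below w is traversed by the path from the point to the root.\<close>

definition emb :: "'v::finite \<Rightarrow> ('v \<Rightarrow> 'v) \<Rightarrow> 'v \<Rightarrow> real \<Rightarrow> real^'v" where
  "emb r par u s = (\<chi> w. if w = u then 1 - s
                          else if w \<noteq> r \<and> w \<in> sanc par u then 1 else 0)"

definition vtx :: "'v::finite \<Rightarrow> ('v \<Rightarrow> 'v) \<Rightarrow> 'v \<Rightarrow> real^'v" where
  "vtx r par v = (if v = r then 0 else emb r par v 0)"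

definition realization :: "'v::finite \<Rightarrow> ('v \<Rightarrow> 'v) \<Rightarrow> (real^'v) set" where
  "realization r par = {0} \<union> (\<Union>u\<in>{u. u \<noteq> r}. emb r par u ` {0..1})"

definition is_leaf :: "'v \<Rightarrow> ('v \<Rightarrow> 'v) \<Rightarrow> 'v \<Rightarrow> bool" where
  "is_leaf r par v \<longleftrightarrow> (\<forall>w. w \<noteq> r \<longrightarrow> par w \<noteq> v)"

definition merge_tree ::
  "'v::finite \<Rightarrow> ('v \<Rightarrow> 'v) \<Rightarrow> (real^'v \<Rightarrow> ereal) \<Rightarrow> bool" where
  "merge_tree r par f \<longleftrightarrow>
     rooted_tree r par \<and>
     continuous_on (realization r par) f \<and>
     (\<forall>x\<in>realization r par. f x = \<infinity> \<longleftrightarrow> x = vtx r par r) \<and>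
     (\<forall>x\<in>realization r par. f x \<noteq> -\<infinity>) \<and>
     (\<forall>\<gamma>. arc \<gamma> \<and> path_image \<gamma> \<subseteq> realization r par \<and> pathfinish \<gamma> = vtx r par r
            \<longrightarrow> strict_mono_on {0..1} (f \<circ> \<gamma>)) \<and>
     (\<exists>v. is_leaf r par v \<and> f (vtx r par v) = 0) \<and>
     (\<forall>v. is_leaf r par v \<longrightarrow> f (vtx r par v) \<ge> 0)"

definition prec ::
  "'v::finite \<Rightarrow> ('v \<Rightarrow> 'v) \<Rightarrow> (real^'v \<Rightarrow> ereal) \<Rightarrow> real^'v \<Rightarrow> real^'v \<Rightarrow> bool" where
  "prec r par f x y \<longleftrightarrow> x \<in> realization r par \<and> y \<in> realization r par \<and>
     (\<exists>\<gamma>. path \<gamma> \<and> path_image \<gamma> \<subseteq> realization r par \<and>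
          pathstart \<gamma> = x \<and> pathfinish \<gamma> = y \<and> mono_on {0..1} (f \<circ> \<gamma>))"

definition subtree ::
  "'v::finite \<Rightarrow> ('v \<Rightarrow> 'v) \<Rightarrow> (real^'v \<Rightarrow> ereal) \<Rightarrow> real^'v \<Rightarrow> (real^'v) set" where
  "subtree r par f x = {y \<in> realization r par. prec r par f y x}"

definition lca ::
  "'v::finite \<Rightarrow> ('v \<Rightarrow> 'v) \<Rightarrow> (real^'v \<Rightarrow> ereal) \<Rightarrow> real^'v \<Rightarrow> real^'v \<Rightarrow> real^'v" where
  "lca r par f x y = (THE z. prec r par f x z \<and> prec r par f y z \<and>
       (\<forall>w. prec r par f x w \<and> prec r par f y w \<longrightarrow> prec r par f z w))"

definition anc ::
  "'v::finite \<Rightarrow> ('v \<Rightarrow> 'v) \<Rightarrow> (real^'v \<Rightarrow> ereal) \<Rightarrow> real \<Rightarrow> real^'v \<Rightarrow> real^'v" where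
  "anc r par f h x = (THE y. prec r par f x y \<and> f y = ereal h)"

definition layer ::
  "'v::finite \<Rightarrow> ('v \<Rightarrow> 'v) \<Rightarrow> (real^'v \<Rightarrow> ereal) \<Rightarrow> real \<Rightarrow> (real^'v) set" where
  "layer r par f h = {x \<in> realization r par. f x = ereal h}"

definition layer_order ::
  "'v::finite \<Rightarrow> ('v \<Rightarrow> 'v) \<Rightarrow> (real^'v \<Rightarrow> ereal) \<Rightarrow>
   (real \<Rightarrow> real^'v \<Rightarrow> real^'v \<Rightarrow> bool) \<Rightarrow> bool" where
  "layer_order r par f le \<longleftrightarrow>
     (\<forall>h\<ge>0. let L = layer r par f h in
        (\<forall>x\<in>L. le h x x) \<and>
        (\<forall>x\<in>L. \<forall>y\<in>L. le h x y \<and> le h y x \<longrightarrow> x = y) \<and>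
        (\<forall>x\<in>L. \<forall>y\<in>L. \<forall>z\<in>L. le h x y \<and> le h y z \<longrightarrow> le h x z) \<and>
        (\<forall>x\<in>L. \<forall>y\<in>L. le h x y \<or> le h y x)) \<and>
     (\<forall>h1 h2 x1 x2. 0 \<le> h1 \<and> h1 \<le> h2 \<and> x1 \<in> layer r par f h1 \<and> x2 \<in> layer r par f h1 \<and>
        le h1 x1 x2 \<longrightarrow> le h2 (anc r par f h2 x1) (anc r par f h2 x2))"

definition visits :: "(real \<Rightarrow> 'a) \<Rightarrow> 'a \<Rightarrow> nat" where
  "visits \<sigma> x = card (components {t \<in> {0..1}. \<sigma> t = x})"

definition down_degree :: "'v::finite \<Rightarrow> ('v \<Rightarrow> 'v) \<Rightarrow> real^'v \<Rightarrow> nat" where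
  "down_degree r par x =
     (if x \<in> range (vtx r par)
      then card {w. w \<noteq> r \<and> par w = (THE v. vtx r par v = x)} else 1)"

text \<open>x roots a planted subtree T_{x,v}: v is a non-root vertex and x a strict ancestor
of v on the parent edge of v (possibly its upper endpoint).\<close>
definition planted_at :: "'v::finite \<Rightarrow> ('v \<Rightarrow> 'v) \<Rightarrow> real^'v \<Rightarrow> 'v \<Rightarrow> bool" where
  "planted_at r par x v \<longleftrightarrow> v \<noteq> r \<and> (\<exists>s\<in>{0<..1}. x = emb r par v s)"

definition planted ::
  "'v::finite \<Rightarrow> ('v \<Rightarrow> 'v) \<Rightarrow> (real^'v \<Rightarrow> ereal) \<Rightarrow> real^'v \<Rightarrow> 'v \<Rightarrow> (real^'v) set" where
  "planted r par f x v = subtree r par f (vtx r par v) \<union>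
     {emb r par v s' | s'. 0 \<le> s' \<and> (\<exists>s. x = emb r par v s \<and> s' \<le> s)}"

definition unvisited_planted ::
  "'v::finite \<Rightarrow> ('v \<Rightarrow> 'v) \<Rightarrow> (real^'v \<Rightarrow> ereal) \<Rightarrow> (real \<Rightarrow> real^'v) \<Rightarrow> real^'v \<Rightarrow> 'v \<Rightarrow> bool" where
  "unvisited_planted r par f \<sigma> x v \<longleftrightarrow> planted_at r par x v \<and>
     (\<forall>y \<in> planted r par f x v - {x}. y \<notin> \<sigma> ` {0..1})"

definition unvisited_degree ::
  "'v::finite \<Rightarrow> ('v \<Rightarrow> 'v) \<Rightarrow> (real^'v \<Rightarrow> ereal) \<Rightarrow> (real \<Rightarrow> real^'v) \<Rightarrow> real^'v \<Rightarrow> nat" where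
  "unvisited_degree r par f \<sigma> x = card {v. unvisited_planted r par f \<sigma> x v}"

definition partial_in_order ::
  "'v::finite \<Rightarrow> ('v \<Rightarrow> 'v) \<Rightarrow> (real^'v \<Rightarrow> ereal) \<Rightarrow>
   (real \<Rightarrow> real^'v \<Rightarrow> real^'v \<Rightarrow> bool) \<Rightarrow> (real \<Rightarrow> real^'v) \<Rightarrow> bool" where
  "partial_in_order r par f le \<tau> \<longleftrightarrow>
     continuous_on {0..1} \<tau> \<and> \<tau> ` {0..1} \<subseteq> realization r par \<and>
     \<tau> 0 = vtx r par r \<and> \<tau> 1 = vtx r par r \<and>
     (\<forall>t1\<in>{0..1}. \<forall>t2\<in>{0..1}. \<forall>h\<ge>0.
        f (\<tau> t1) = ereal h \<and> f (\<tau> t2) = ereal h \<and> le h (\<tau> t1) (\<tau> t2) \<and> \<tau> t1 \<noteq> \<tau> t2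
        \<longrightarrow> t1 < t2) \<and>
     (\<forall>x\<in>realization r par.
        int (visits \<tau> x) = int (down_degree r par x) + 1 - int (unvisited_degree r par f \<tau> x))"

definition in_order ::
  "'v::finite \<Rightarrow> ('v \<Rightarrow> 'v) \<Rightarrow> (real^'v \<Rightarrow> ereal) \<Rightarrow>
   (real \<Rightarrow> real^'v \<Rightarrow> real^'v \<Rightarrow> bool) \<Rightarrow> (real \<Rightarrow> real^'v) \<Rightarrow> bool" where
  "in_order r par f le \<tau> \<longleftrightarrow> partial_in_order r par f le \<tau> \<and>
     (\<forall>x\<in>realization r par. visits \<tau> x = down_degree r par x + 1)"

end

theory Submission imports Defs begin

definition cle :: "real^'v::finite \<Rightarrow> real^'v \<Rightarrow> bool" where
  "cle x y \<longleftrightarrow> (\<forall>w. x $ w \<le> y $ w)"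

definition vinf :: "real^'v::finite \<Rightarrow> real^'v \<Rightarrow> real^'v" where
  "vinf a b = (\<chi> w. min (a $ w) (b $ w))"

context fixes r :: "'v::finite" and par :: "'v \<Rightarrow> 'v"
  assumes rt: "rooted_tree r par"
begin

lemma par_r: "par r = r" using rt unfolding rooted_tree_def by blast

lemma funpow_split: "k \<le> n \<Longrightarrow> (par ^^ n) v = (par ^^ (n - k)) ((par ^^ k) v)"
  by (metis funpow_add le_add_diff_inverse2 comp_apply)

lemma funpow_r: "(par ^^ n) r = r"
  by (induction n) (auto simp: par_r)

lemma reach: "\<exists>n. (par ^^ n) v = r" using rt unfolding rooted_tree_def by blast

lemma r_sanc: "r \<in> sanc par v"
proof -
  obtain n where n: "(par ^^ n) v = r" using reach by blast
  show ?thesis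
  proof (cases "n = 0")
    case True
    then have "v = r" using n by simp
    then have "(par ^^ 1) v = r" by (simp add: par_r)
    then show ?thesis unfolding sanc_def by blast
  next
    case False then show ?thesis using n unfolding sanc_def by (intro CollectI exI[of _ n]) auto
  qed
qed

lemma sanc_r: "sanc par r = {r}"
  using funpow_r r_sanc unfolding sanc_def by auto

lemma sanc_trans: "u \<in> sanc par v \<Longrightarrow> x \<in> sanc par u \<Longrightarrow> x \<in> sanc par v"
proof -
  assume "u \<in> sanc par v" "x \<in> sanc par u"
  then obtain n m where "u = (par ^^ n) v" "n \<ge> 1" "x = (par ^^ m) u" "m \<ge> 1"
    unfolding sanc_def by blast
  then have "x = (par ^^ (m + n)) v" by (simp add: funpow_add)
  then show ?thesis using \<open>n \<ge> 1\<close> unfolding sanc_def by (intro CollectI exI[of _ "m+n"]) auto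
qed

lemma funpow_mult_fix: "(par ^^ n) v = v \<Longrightarrow> (par ^^ (n * k)) v = v"
proof (induction k)
  case 0 then show ?case by simp
next
  case (Suc k)
  have "(par ^^ (n * Suc k)) v = (par ^^ n) ((par ^^ (n * k)) v)"
    by (simp add: funpow_add mult.commute)
  then show ?case using Suc by simp
qed

lemma acyclic: "v \<in> sanc par v \<Longrightarrow> v = r"
proof -
  assume "v \<in> sanc par v"
  then obtain n where n: "(par ^^ n) v = v" "n \<ge> 1" unfolding sanc_def by (auto dest: sym)
  obtain m where m: "(par ^^ m) v = r" using reach by blast
  have "m \<le> n * m" using n(2) by simp
  then have "(par ^^ (n * m)) v = (par ^^ (n * m - m)) ((par ^^ m) v)"
    by (rule funpow_split)
  also have "\<dots> = r" using m funpow_r by simp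
  finally show "v = r" using funpow_mult_fix[OF n(1)] by simp
qed

lemma sanc_par: "sanc par v = insert (par v) (sanc par (par v))"
proof
  show "sanc par v \<subseteq> insert (par v) (sanc par (par v))"
  proof
    fix x assume "x \<in> sanc par v"
    then obtain n where n: "x = (par ^^ n) v" "n \<ge> 1" unfolding sanc_def by blast
    show "x \<in> insert (par v) (sanc par (par v))"
    proof (cases "n = 1")
      case True then show ?thesis using n by simp
    next
      case False
      then have "x = (par ^^ (n - 1)) (par v)" "n - 1 \<ge> 1" using n funpow_split[of 1 n v]
        by auto
      then show ?thesis unfolding sanc_def by blast
    qed
  qed
next
  show "insert (par v) (sanc par (par v)) \<subseteq> sanc par v"
  proof
    fix x assume "x \<in> insert (par v) (sanc par (par v))"
    then show "x \<in> sanc par v"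
    proof
      assume "x = par v" then show ?thesis unfolding sanc_def
        by (intro CollectI exI[of _ 1]) auto
    next
      assume "x \<in> sanc par (par v)"
      then obtain n where n: "x = (par ^^ n) (par v)" "n \<ge> 1" unfolding sanc_def by blast
      then have "x = (par ^^ (Suc n)) v" by (simp add: funpow_Suc_right del: funpow.simps)
      then show ?thesis unfolding sanc_def by (intro CollectI exI[of _ "Suc n"]) auto
    qed
  qed
qed

lemma par_in_sanc: "par v \<in> sanc par v" using sanc_par by blast

lemma sanc_antisym: "u \<in> sanc par w \<Longrightarrow> w \<in> sanc par u \<Longrightarrow> False \<or> (u = r \<and> w = r)"
  using sanc_trans acyclic sanc_r by blast

lemma lowest_common: "\<exists>m. sanc par v \<inter> sanc par w = insert m (sanc par m)"
proof -
  define P where "P = (\<lambda>n. n \<ge> 1 \<and> (par ^^ n) v \<in> sanc par w)"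
  obtain N where N: "(par ^^ N) v = r" using reach by blast
  have "(par ^^ (N+1)) v = r" using N funpow_r by (simp add: funpow_add par_r)
  then have "P (N+1)" using r_sanc unfolding P_def by auto
  define n0 where "n0 = (LEAST n. P n)"
  have Pn0: "P n0" unfolding n0_def by (rule LeastI[of P, OF \<open>P (N+1)\<close>])
  have least: "\<And>n. P n \<Longrightarrow> n0 \<le> n" unfolding n0_def by (rule Least_le)
  define m where "m = (par ^^ n0) v"
  have "sanc par v \<inter> sanc par w = insert m (sanc par m)"
  proof
    show "sanc par v \<inter> sanc par w \<subseteq> insert m (sanc par m)"
    proof
      fix x assume x: "x \<in> sanc par v \<inter> sanc par w"
      then obtain n where n: "x = (par ^^ n) v" "n \<ge> 1" unfolding sanc_def by blast
      then have "P n" using x unfolding P_def by auto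
      then have "n0 \<le> n" by (rule least)
      show "x \<in> insert m (sanc par m)"
      proof (cases "n = n0")
        case True then show ?thesis using n m_def by simp
      next
        case False
        then have "x = (par ^^ (n - n0)) m" "n - n0 \<ge> 1" using \<open>n0 \<le> n\<close> n
          funpow_split[of n0 n v] unfolding m_def by auto
        then show ?thesis unfolding sanc_def by blast
      qed
    qed
  next
    have mv: "m \<in> sanc par v" and mw: "m \<in> sanc par w" using Pn0 unfolding P_def m_def sanc_def by auto
    show "insert m (sanc par m) \<subseteq> sanc par v \<inter> sanc par w"
      using mv mw sanc_trans by blast
  qed
  then show ?thesis by blast
qed


lemma emb_nth: "emb r par u s $ w = (if w = u then 1 - s else if w \<noteq> r \<and> w \<in> sanc par u then 1 else 0)"
  by (simp add: emb_def)

lemma vtx_r: "vtx r par r = 0" by (simp add: vtx_def)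

lemma not_self_sanc: "v \<noteq> r \<Longrightarrow> v \<notin> sanc par v" using acyclic by blast

lemma emb_one: "v \<noteq> r \<Longrightarrow> emb r par v 1 = (if par v = r then 0 else emb r par (par v) 0)"
proof -
  assume v: "v \<noteq> r"
  have a: "v \<notin> sanc par (par v)" using sanc_par not_self_sanc[OF v] by blast
  show ?thesis
  proof (cases "par v = r")
    case True
    then have "sanc par v = {r}" using sanc_par[of v] sanc_r by simp
    then show ?thesis using True by (simp add: vec_eq_iff emb_nth)
  next
    case False
    have "par v \<noteq> v" using par_in_sanc not_self_sanc[OF v] by metis
    have b: "\<And>w. w \<in> sanc par v \<longleftrightarrow> w = par v \<or> w \<in> sanc par (par v)" using sanc_par[of v] by blast
    show ?thesis using False a \<open>par v \<noteq> v\<close> by (auto simp: vec_eq_iff emb_nth b)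
  qed
qed

lemma emb_linepath: "linepath (emb r par v a) (emb r par v b) t = emb r par v ((1-t)*a + t*b)"
  by (simp add: linepath_def vec_eq_iff emb_nth algebra_simps)

lemma emb_in_R: "v \<noteq> r \<Longrightarrow> 0 \<le> s \<Longrightarrow> s \<le> 1 \<Longrightarrow> emb r par v s \<in> realization r par"
  unfolding realization_def by (intro UnI2 UN_I[of v]) auto

lemma zero_in_R: "0 \<in> realization r par" unfolding realization_def by (intro UnI1) simp

lemma R_cases: "x \<in> realization r par \<Longrightarrow> x = 0 \<or> (\<exists>v s. v \<noteq> r \<and> 0 \<le> s \<and> s < 1 \<and> x = emb r par v s)"
proof -
  assume "x \<in> realization r par"
  then consider "x = 0" | u s where "u \<noteq> r" "0 \<le> s" "s \<le> 1" "x = emb r par u s"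
    unfolding realization_def by (auto simp del: emb_def)
  then show ?thesis
  proof cases
    case 1 then show ?thesis by simp
  next
    case (2 u s)
    show ?thesis
    proof (cases "s < 1")
      case True then show ?thesis using 2 by blast
    next
      case False
      then have "s = 1" using 2 by simp
      show ?thesis
      proof (cases "par u = r")
        case True then show ?thesis using 2 emb_one[of u] \<open>s = 1\<close> by simp
      next
        case False
        then have "x = emb r par (par u) 0" using 2 emb_one[of u] \<open>s = 1\<close> by simp
        then show ?thesis using False by (intro disjI2 exI[of _ "par u"] exI[of _ 0]) simp
      qed
    qed
  qed
qed

lemma R_range: "x \<in> realization r par \<Longrightarrow> 0 \<le> x $ w \<and> x $ w \<le> 1"
  unfolding realization_def by (auto simp: emb_nth simp del: emb_def)

lemma emb_frac: "0 < emb r par v s $ u \<Longrightarrow> emb r par v s $ u < 1 \<Longrightarrow> u = v"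
  by (auto simp: emb_nth split: if_splits)

lemma R_frac: "x \<in> realization r par \<Longrightarrow> 0 < x $ u \<Longrightarrow> x $ u < 1 \<Longrightarrow> u \<noteq> r \<and> x = emb r par u (1 - x $ u)"
proof -
  assume x: "x \<in> realization r par" and u: "0 < x $ u" "x $ u < 1"
  then have "x \<noteq> 0" by auto
  then obtain v s where vs: "v \<noteq> r" "0 \<le> s" "s < 1" "x = emb r par v s" using R_cases[OF x] by blast
  then have "u = v" using emb_frac u by blast
  then show ?thesis using vs by (simp add: emb_nth)
qed

lemma emb_pos: "0 < emb r par v s $ u \<Longrightarrow> u = v \<or> (u \<noteq> r \<and> u \<in> sanc par v)"
  by (auto simp: emb_nth split: if_splits)

lemma emb_nonneg: "s \<le> 1 \<Longrightarrow> 0 \<le> emb r par v s $ u"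
  by (auto simp: emb_nth)

lemma sanc_cycle: "u \<in> sanc par w \<Longrightarrow> w \<in> sanc par u \<Longrightarrow> w = r"
  using sanc_trans acyclic by blast

lemma below_split:
  assumes y: "y \<in> realization r par" and v: "v \<noteq> r" and s: "0 \<le> \<sigma>" "\<sigma> \<le> 1"
    and le: "cle y (emb r par v \<sigma>)"
  shows "(\<exists>\<rho>. \<sigma> \<le> \<rho> \<and> \<rho> \<le> 1 \<and> y = emb r par v \<rho>) \<or> cle y (emb r par v 1)"
proof -
  consider "y = 0" | w \<rho> where "w \<noteq> r" "0 \<le> \<rho>" "\<rho> < 1" "y = emb r par w \<rho>"
    using R_cases[OF y] by blast
  then show ?thesis
  proof cases
    case 1 then show ?thesis by (auto simp: cle_def emb_nonneg)
  next
    case (2 w \<rho>)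
    have "y $ w = 1 - \<rho>" using 2 by (simp add: emb_nth)
    then have "0 < emb r par v \<sigma> $ w" using le 2 unfolding cle_def by (metis diff_gt_0_iff_gt order_less_le_trans)
    then have wv: "w = v \<or> (w \<noteq> r \<and> w \<in> sanc par v)" by (rule emb_pos)
    show ?thesis
    proof (cases "w = v")
      case True
      have "1 - \<rho> \<le> 1 - \<sigma>" using le 2 True unfolding cle_def by (metis emb_nth)
      then show ?thesis using True 2 by auto
    next
      case False
      then have ws: "w \<in> sanc par v" using wv by blast
      have "cle y (emb r par v 1)" unfolding cle_def
      proof
        fix z
        show "y $ z \<le> emb r par v 1 $ z"
        proof (cases "z = w")
          case True then show ?thesis using 2 ws False by (simp add: emb_nth)
        next
          case zw: False
          show ?thesis
          proof (cases "z \<noteq> r \<and> z \<in> sanc par w")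
            case True
            then have "z \<in> sanc par v" using sanc_trans ws by blast
            moreover have "z \<noteq> v" using True ws sanc_cycle 2(1) by blast
            ultimately show ?thesis using True 2 zw by (simp add: emb_nth)
          next
            case False
            then have "y $ z = 0" using 2 zw unfolding 2(4) emb_nth by auto
            then show ?thesis by (simp add: emb_nonneg)
          qed
        qed
      qed
      then show ?thesis by blast
    qed
  qed
qed

lemma above:
  assumes y: "y \<in> realization r par" and c: "0 < c" "c < 1" and yu: "c < y $ u"
  shows "cle (emb r par u (1 - c)) y"
proof -
  have "y \<noteq> 0" using yu c by auto
  then obtain w \<rho> where 2: "w \<noteq> r" "0 \<le> \<rho>" "\<rho> < 1" "y = emb r par w \<rho>"
    using R_cases[OF y] by blast
  have uw: "u = w \<or> (u \<noteq> r \<and> u \<in> sanc par w)" using emb_pos yu c 2(4) by (metis order_less_trans)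
  have ynn: "\<And>z. 0 \<le> y $ z" using R_range[OF y] by blast
  show ?thesis unfolding cle_def
  proof
    fix z
    show "emb r par u (1 - c) $ z \<le> y $ z"
    proof (cases "u = w")
      case True
      then show ?thesis using yu 2 by (auto simp: emb_nth)
    next
      case False
      then have us: "u \<in> sanc par w" "u \<noteq> r" using uw by blast+
      show ?thesis
      proof (cases "z = u")
        case True then show ?thesis using us False 2 c by (simp add: emb_nth)
      next
        case zu: False
        show ?thesis
        proof (cases "z \<noteq> r \<and> z \<in> sanc par u")
          case True
          then have "z \<in> sanc par w" using sanc_trans us by blast
          moreover have "z \<noteq> w" using True us sanc_cycle 2(1) by blast
          ultimately show ?thesis using True 2 zu by (simp add: emb_nth)
        next
          case False
          then have "emb r par u (1 - c) $ z = 0" using zu unfolding emb_nth by auto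
          then show ?thesis using ynn by simp
        qed
      qed
    qed
  qed
qed


lemma vinf_cle: "cle a b \<Longrightarrow> vinf a b = a"
  by (auto simp: cle_def vinf_def vec_eq_iff min_def)

lemma vinf_comm: "vinf a b = vinf b a"
  by (auto simp: vinf_def vec_eq_iff min_def)

lemma emb_cle_anc:
  assumes "v \<in> sanc par w" "v \<noteq> r" "w \<noteq> r" "0 \<le> \<sigma>" "\<sigma> \<le> 1" "0 \<le> \<rho>" "\<rho> < 1"
  shows "cle (emb r par v \<sigma>) (emb r par w \<rho>)"
  unfolding cle_def
proof
  fix z
  have vw: "v \<noteq> w" using assms acyclic by blast
  show "emb r par v \<sigma> $ z \<le> emb r par w \<rho> $ z"
  proof (cases "z = v")
    case True then show ?thesis using assms vw by (simp add: emb_nth)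
  next
    case zv: False
    show ?thesis
    proof (cases "z \<noteq> r \<and> z \<in> sanc par v")
      case True
      then have "z \<in> sanc par w" using sanc_trans assms by blast
      moreover have "z \<noteq> w" using True assms sanc_cycle by blast
      ultimately show ?thesis using True zv by (simp add: emb_nth)
    next
      case False
      then have "emb r par v \<sigma> $ z = 0" using zv unfolding emb_nth by auto
      then show ?thesis using assms by (simp add: emb_nonneg)
    qed
  qed
qed

lemma vinf_in_R:
  assumes a: "a \<in> realization r par" and b: "b \<in> realization r par"
  shows "vinf a b \<in> realization r par"
proof -
  have an: "\<And>z. 0 \<le> a $ z" and bn: "\<And>z. 0 \<le> b $ z" using R_range a b by blast+
  consider "a = 0" | "b = 0" | v \<sigma> w \<rho> where "v \<noteq> r" "0 \<le> \<sigma>" "\<sigma> < 1" "a = emb r par v \<sigma>"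
     "w \<noteq> r" "0 \<le> \<rho>" "\<rho> < 1" "b = emb r par w \<rho>"
    using R_cases[OF a] R_cases[OF b] by blast
  then show ?thesis
  proof cases
    case 1 then have "vinf a b = a" using bn by (intro vinf_cle) (simp add: cle_def)
    then show ?thesis using a by simp
  next
    case 2 then have "vinf b a = b" using an by (intro vinf_cle) (simp add: cle_def)
    then show ?thesis using b vinf_comm by metis
  next
    case (3 v \<sigma> w \<rho>)
    show ?thesis
    proof (cases "v = w")
      case True
      show ?thesis
      proof (cases "\<sigma> \<le> \<rho>")
        case False
        then have cab: "cle a b" using 3 True by (auto simp: cle_def emb_nth)
        show ?thesis using vinf_cle[OF cab] a by simp
      next
        case tt: True
        then have cab: "cle b a" using 3 True by (auto simp: cle_def emb_nth)
        show ?thesis using vinf_cle[OF cab] b vinf_comm by metis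
      qed
    next
      case vw: False
      show ?thesis
      proof (cases "v \<in> sanc par w")
        case True
        then have cab: "cle a b" using 3 emb_cle_anc by simp
        show ?thesis using vinf_cle[OF cab] a by simp
      next
        case nvw: False
        show ?thesis
        proof (cases "w \<in> sanc par v")
          case True
          then have cab: "cle b a" using 3 emb_cle_anc by simp
          show ?thesis using vinf_cle[OF cab] b vinf_comm by metis
        next
          case nwv: False
          obtain m where m: "sanc par v \<inter> sanc par w = insert m (sanc par m)"
            using lowest_common by blast
          have vv: "v \<notin> sanc par v" "w \<notin> sanc par w" using 3 acyclic by blast+
          have eq: "vinf a b = (\<chi> z. if z \<noteq> r \<and> z \<in> insert m (sanc par m) then 1 else 0)"
            unfolding vec_eq_iff vinf_def
          proof
            fix z
            show "(\<chi> w. min (a $ w) (b $ w)) $ z = (\<chi> z. if z \<noteq> r \<and> z \<in> insert m (sanc par m) then 1 else 0) $ z"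
            proof (cases "z = v \<or> z = w")
              case True
              then have "z \<notin> insert m (sanc par m)" using m vv by blast
              then show ?thesis using True 3 vw nvw nwv by (auto simp: emb_nth)
            next
              case False
              have "z \<in> insert m (sanc par m) \<longleftrightarrow> z \<in> sanc par v \<and> z \<in> sanc par w" using m by blast
              then show ?thesis using False 3 by (auto simp: emb_nth)
            qed
          qed
          show ?thesis
          proof (cases "m = r")
            case True
            then have "vinf a b = 0" using eq sanc_r by (simp add: vec_eq_iff)
            then show ?thesis using zero_in_R by simp
          next
            case False
            then have "vinf a b = emb r par m 0" using eq by (simp add: vec_eq_iff emb_nth)
            then show ?thesis using emb_in_R False by simp
          qed
        qed
      qed
    qed
  qed
qed

lemma cle_trans: "cle x y \<Longrightarrow> cle y z \<Longrightarrow> cle x z"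
  unfolding cle_def by (meson order_trans)

lemma emb_mono_cle: "\<sigma> \<le> s \<Longrightarrow> cle (emb r par v s) (emb r par v \<sigma>)"
  by (auto simp: cle_def emb_nth)

lemma seg_img:
  assumes "y \<in> path_image (linepath (emb r par v \<sigma>) (emb r par v 1))" "\<sigma> \<le> 1"
  shows "\<exists>s. \<sigma> \<le> s \<and> s \<le> 1 \<and> y = emb r par v s"
proof -
  obtain t where t0: "t \<in> {0..1}" "y = linepath (emb r par v \<sigma>) (emb r par v 1) t"
    using assms(1) unfolding path_image_def by blast
  then have t: "0 \<le> t" "t \<le> 1" "y = emb r par v ((1-t)*\<sigma> + t*1)"
    by (simp_all only: emb_linepath atLeastAtMost_iff)
  have "\<sigma> * t \<le> 1 * t" using mult_right_mono[OF assms(2) t(1)] .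
  then have "\<sigma> \<le> (1-t)*\<sigma> + t*1" by (simp add: algebra_simps)
  moreover have "(1-t)*\<sigma> + t*1 \<le> 1"
  proof -
    have "(1-t)*\<sigma> \<le> (1-t)*1" using mult_left_mono[OF assms(2)] t(2) by simp
    then show ?thesis by simp
  qed
  ultimately show ?thesis using t(3) by blast
qed

lemma seg_cover:
  assumes "\<sigma> \<le> \<rho>" "\<rho> \<le> 1" "\<sigma> < 1"
  shows "emb r par v \<rho> \<in> path_image (linepath (emb r par v \<sigma>) (emb r par v 1))"
proof -
  define t where "t = (\<rho> - \<sigma>) / (1 - \<sigma>)"
  have pos: "0 < 1 - \<sigma>" using assms by simp
  have t: "0 \<le> t" "t \<le> 1" using assms pos unfolding t_def by (simp_all add: divide_le_eq_1)
  have "t * (1 - \<sigma>) = \<rho> - \<sigma>" using pos unfolding t_def by simp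
  then have "(1-t)*\<sigma> + t*1 = \<rho>" by (simp add: algebra_simps)
  then have "linepath (emb r par v \<sigma>) (emb r par v 1) t = emb r par v \<rho>" by (simp only: emb_linepath)
  then show ?thesis using t unfolding path_image_def by force
qed

lemma cle_zero: "y \<in> realization r par \<Longrightarrow> cle y 0 \<Longrightarrow> y = 0"
  unfolding cle_def vec_eq_iff using R_range by (metis order_antisym zero_index)

lemma arc_exists:
  "\<forall>v (\<sigma>::real). (par ^^ n) v = r \<longrightarrow> v \<noteq> r \<longrightarrow> 0 \<le> \<sigma> \<longrightarrow> \<sigma> < 1 \<longrightarrow>
    (\<exists>\<gamma>. arc \<gamma> \<and> pathstart \<gamma> = emb r par v \<sigma> \<and> pathfinish \<gamma> = 0 \<and>
       path_image \<gamma> \<subseteq> realization r par \<and> (\<forall>y\<in>path_image \<gamma>. cle y (emb r par v \<sigma>)) \<and>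
       (\<forall>y\<in>realization r par. cle y (emb r par v \<sigma>) \<longrightarrow> y \<in> path_image \<gamma>))"
proof (induction n)
  case 0 then show ?case by simp
next
  case (Suc n)
  show ?case
  proof (intro allI impI)
    fix v and \<sigma> :: real
    assume vn: "(par ^^ Suc n) v = r" and v: "v \<noteq> r" and s: "0 \<le> \<sigma>" "\<sigma> < 1"
    define seg where "seg = linepath (emb r par v \<sigma>) (emb r par v 1)"
    have ne: "emb r par v \<sigma> \<noteq> emb r par v 1"
    proof
      assume "emb r par v \<sigma> = emb r par v 1"
      then have "emb r par v \<sigma> $ v = emb r par v 1 $ v" by simp
      then show False using s by (simp add: emb_nth)
    qed
    have arcseg: "arc seg" unfolding seg_def using ne by (rule arc_linepath)
    have segR: "path_image seg \<subseteq> realization r par"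
    proof
      fix y assume "y \<in> path_image seg"
      then obtain s' where "\<sigma> \<le> s'" "s' \<le> 1" "y = emb r par v s'" using seg_img[of y v \<sigma>] s unfolding seg_def by auto
      then show "y \<in> realization r par" using emb_in_R[OF v] s by simp
    qed
    have segcle: "\<forall>y\<in>path_image seg. cle y (emb r par v \<sigma>)"
    proof
      fix y assume "y \<in> path_image seg"
      then obtain s' where "\<sigma> \<le> s'" "s' \<le> 1" "y = emb r par v s'" using seg_img[of y v \<sigma>] s unfolding seg_def by auto
      then show "cle y (emb r par v \<sigma>)" using emb_mono_cle by simp
    qed
    have seg_start: "pathstart seg = emb r par v \<sigma>" and seg_fin: "pathfinish seg = emb r par v 1"
      unfolding seg_def by simp_all
    show "\<exists>\<gamma>. arc \<gamma> \<and> pathstart \<gamma> = emb r par v \<sigma> \<and> pathfinish \<gamma> = 0 \<and>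
       path_image \<gamma> \<subseteq> realization r par \<and> (\<forall>y\<in>path_image \<gamma>. cle y (emb r par v \<sigma>)) \<and>
       (\<forall>y\<in>realization r par. cle y (emb r par v \<sigma>) \<longrightarrow> y \<in> path_image \<gamma>)"
    proof (cases "par v = r")
      case True
      then have e1: "emb r par v 1 = 0" using emb_one[OF v] by simp
      have cover: "\<forall>y\<in>realization r par. cle y (emb r par v \<sigma>) \<longrightarrow> y \<in> path_image seg"
      proof (intro ballI impI)
        fix y assume y: "y \<in> realization r par" "cle y (emb r par v \<sigma>)"
        from below_split[OF y(1) v s(1) _ y(2)] s
        consider \<rho> where "\<sigma> \<le> \<rho>" "\<rho> \<le> 1" "y = emb r par v \<rho>" | "cle y (emb r par v 1)" by (metis less_eq_real_def)
        then show "y \<in> path_image seg"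
        proof cases
          case 1 then show ?thesis using seg_cover s unfolding seg_def by blast
        next
          case 2 then have "y = 0" using cle_zero y e1 by simp
          then show ?thesis using seg_fin e1 pathfinish_in_path_image by metis
        qed
      qed
      show ?thesis
        apply (rule exI[of _ seg])
        using arcseg seg_start seg_fin e1 segR segcle cover by simp
    next
      case False
      have e1: "emb r par v 1 = emb r par (par v) 0" using emb_one[OF v] False by simp
      have pvn: "(par ^^ n) (par v) = r" using vn by (simp add: funpow_Suc_right del: funpow.simps)
      have pvr: "par v \<noteq> r" using False .
      have IH: "\<exists>\<gamma>. arc \<gamma> \<and> pathstart \<gamma> = emb r par (par v) 0 \<and> pathfinish \<gamma> = 0 \<and>
       path_image \<gamma> \<subseteq> realization r par \<and> (\<forall>y\<in>path_image \<gamma>. cle y (emb r par (par v) 0)) \<and>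
       (\<forall>y\<in>realization r par. cle y (emb r par (par v) 0) \<longrightarrow> y \<in> path_image \<gamma>)"
        using Suc.IH[rule_format, OF pvn pvr] by simp
      then obtain \<gamma> where g: "arc \<gamma>" "pathstart \<gamma> = emb r par (par v) 0" "pathfinish \<gamma> = 0"
        "path_image \<gamma> \<subseteq> realization r par" "\<forall>y\<in>path_image \<gamma>. cle y (emb r par (par v) 0)"
        "\<forall>y\<in>realization r par. cle y (emb r par (par v) 0) \<longrightarrow> y \<in> path_image \<gamma>"
        by blast
      have join: "pathfinish seg = pathstart \<gamma>" using seg_fin e1 g(2) by simp
      have vpv: "v \<noteq> par v" using par_in_sanc not_self_sanc[OF v] by metis
      have vnot: "v \<notin> sanc par (par v)" using sanc_par[of v] not_self_sanc[OF v] by blast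
      have disj: "path_image seg \<inter> path_image \<gamma> \<subseteq> {pathstart \<gamma>}"
      proof
        fix y assume y: "y \<in> path_image seg \<inter> path_image \<gamma>"
        then obtain s' where s': "\<sigma> \<le> s'" "s' \<le> 1" "y = emb r par v s'"
          using seg_img[of y v \<sigma>] s unfolding seg_def by auto
        have "cle y (emb r par (par v) 0)" using y g(5) by blast
        then have "y $ v \<le> emb r par (par v) 0 $ v" unfolding cle_def by blast
        also have "\<dots> = 0" using vpv vnot by (simp add: emb_nth)
        finally have "s' = 1" using s' by (simp add: emb_nth)
        then show "y \<in> {pathstart \<gamma>}" using s' e1 g(2) by simp
      qed
      have arcj: "arc (seg +++ \<gamma>)" using arc_join[OF arcseg g(1) join disj] .
      have img: "path_image (seg +++ \<gamma>) = path_image seg \<union> path_image \<gamma>"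
        using path_image_join[OF join] .
      have c1: "cle (emb r par (par v) 0) (emb r par v \<sigma>)" using e1 emb_mono_cle s by (metis less_eq_real_def)
      have cover: "\<forall>y\<in>realization r par. cle y (emb r par v \<sigma>) \<longrightarrow> y \<in> path_image seg \<union> path_image \<gamma>"
      proof (intro ballI impI)
        fix y assume y: "y \<in> realization r par" "cle y (emb r par v \<sigma>)"
        from below_split[OF y(1) v s(1) _ y(2)] s
        consider \<rho> where "\<sigma> \<le> \<rho>" "\<rho> \<le> 1" "y = emb r par v \<rho>" | "cle y (emb r par v 1)" by (metis less_eq_real_def)
        then show "y \<in> path_image seg \<union> path_image \<gamma>"
        proof cases
          case 1 then show ?thesis using seg_cover s unfolding seg_def by blast
        next
          case 2 then show ?thesis using g(6) y e1 by simp
        qed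
      qed
      have gcle: "\<forall>y\<in>path_image \<gamma>. cle y (emb r par v \<sigma>)" using g(5) cle_trans[OF _ c1] by blast
      show ?thesis
        apply (rule exI[of _ "seg +++ \<gamma>"])
        using gcle
        using arcj img seg_start g(3,4,5) segR segcle cover c1 cle_trans by auto
    qed
  qed
qed

lemma arc_through:
  assumes x: "x \<in> realization r par" and y: "y \<in> realization r par" and le: "cle y x" and ne: "y \<noteq> x"
  shows "\<exists>\<gamma> s. arc \<gamma> \<and> pathstart \<gamma> = x \<and> pathfinish \<gamma> = 0 \<and> path_image \<gamma> \<subseteq> realization r par
     \<and> 0 < s \<and> s \<le> 1 \<and> \<gamma> s = y"
proof -
  have "x \<noteq> 0" using cle_zero[OF y] le ne by auto
  then obtain v \<sigma> where vs: "v \<noteq> r" "0 \<le> \<sigma>" "\<sigma> < 1" "x = emb r par v \<sigma>" using R_cases[OF x] by blast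
  obtain n where "(par ^^ n) v = r" using reach by blast
  then obtain \<gamma> where g: "arc \<gamma>" "pathstart \<gamma> = x" "pathfinish \<gamma> = 0"
       "path_image \<gamma> \<subseteq> realization r par" "\<forall>y\<in>realization r par. cle y x \<longrightarrow> y \<in> path_image \<gamma>"
    using arc_exists[of n, rule_format, OF _ vs(1-3)] vs(4) by blast
  then have "y \<in> path_image \<gamma>" using y le by blast
  then obtain s where s: "0 \<le> s" "s \<le> 1" "\<gamma> s = y" unfolding path_image_def by auto
  have "s \<noteq> 0" using s g(2) ne unfolding pathstart_def by auto
  then show ?thesis using g s by (intro exI[of _ \<gamma>] exI[of _ s]) auto
qed

end

context fixes r :: "'v::finite" and par :: "'v \<Rightarrow> 'v" and f :: "real^'v \<Rightarrow> ereal"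
  assumes mt: "merge_tree r par f"
begin

lemma rt: "rooted_tree r par" using mt unfolding merge_tree_def by blast

lemma arc_mono: "arc \<gamma> \<Longrightarrow> path_image \<gamma> \<subseteq> realization r par \<Longrightarrow> pathfinish \<gamma> = 0
   \<Longrightarrow> strict_mono_on {0..1} (f \<circ> \<gamma>)"
proof -
  assume a: "arc \<gamma>" "path_image \<gamma> \<subseteq> realization r par" "pathfinish \<gamma> = 0"
  have "\<forall>\<gamma>. arc \<gamma> \<and> path_image \<gamma> \<subseteq> realization r par \<and> pathfinish \<gamma> = vtx r par r
            \<longrightarrow> strict_mono_on {0..1} (f \<circ> \<gamma>)" using mt unfolding merge_tree_def by blast
  then show ?thesis using a vtx_r[OF rt] by simp
qed

lemma f_less:
  assumes x: "x \<in> realization r par" and y: "y \<in> realization r par" and le: "cle y x" and ne: "y \<noteq> x"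
  shows "f x < f y"
proof -
  obtain \<gamma> s where g: "arc \<gamma>" "pathstart \<gamma> = x" "pathfinish \<gamma> = 0" "path_image \<gamma> \<subseteq> realization r par"
     "0 < s" "s \<le> 1" "\<gamma> s = y" using arc_through[OF rt x y le ne] by blast
  have "(f \<circ> \<gamma>) 0 < (f \<circ> \<gamma>) s"
    by (rule strict_mono_onD[OF arc_mono[OF g(1,4,3)]]) (use g(5,6) in auto)
  then show ?thesis using g(2,7) unfolding pathstart_def by simp
qed

lemma prec_iff: "prec r par f x y \<longleftrightarrow> x \<in> realization r par \<and> y \<in> realization r par \<and> cle y x"
proof
  assume p: "prec r par f x y"
  then have x: "x \<in> realization r par" and y: "y \<in> realization r par" unfolding prec_def by auto
  from p obtain \<gamma> where g: "path \<gamma>" "path_image \<gamma> \<subseteq> realization r par" "pathstart \<gamma> = x"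
     "pathfinish \<gamma> = y" "mono_on {0..1} (f \<circ> \<gamma>)" unfolding prec_def by blast
  have "cle y x" unfolding cle_def
  proof (rule ccontr)
    assume "\<not> (\<forall>w. y $ w \<le> x $ w)"
    then obtain u where u: "x $ u < y $ u" by (meson not_le)
    define c where "c = (x $ u + y $ u) / 2"
    have c: "0 < c" "c < 1" "x $ u < c" "c < y $ u" using u R_range[OF rt x, of u] R_range[OF rt y, of u]
      unfolding c_def by auto
    have cont: "continuous_on {0..1} (\<lambda>t. \<gamma> t $ u)" using g(1) unfolding path_def
      by (rule continuous_on_component)
    obtain t where t: "0 \<le> t" "t \<le> 1" "\<gamma> t $ u = c"
      using IVT'[of "\<lambda>t. \<gamma> t $ u" 0 c 1, OF _ _ _ cont] g(3,4) c unfolding pathstart_def pathfinish_def by auto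
    have et: "\<gamma> t \<in> realization r par" using g(2) t unfolding path_image_def by auto
    then have e: "\<gamma> t = emb r par u (1 - c)" using R_frac[OF rt et, of u] t(3) c(1,2) by simp
    have "cle (\<gamma> t) y" using above[OF rt y c(1,2) c(4)] e by simp
    moreover have "\<gamma> t \<noteq> y" using t c by auto
    ultimately have "f y < f (\<gamma> t)" using f_less[OF y et] by simp
    moreover have "f (\<gamma> t) \<le> f (\<gamma> 1)" using mono_onD[OF g(5), of t 1] t by simp
    ultimately show False using g(4) unfolding pathfinish_def by simp
  qed
  then show "x \<in> realization r par \<and> y \<in> realization r par \<and> cle y x" using x y by blast
next
  assume a: "x \<in> realization r par \<and> y \<in> realization r par \<and> cle y x"
  then have x: "x \<in> realization r par" and y: "y \<in> realization r par" and le: "cle y x" by auto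
  show "prec r par f x y"
  proof (cases "y = x")
    case True
    have "path (\<lambda>t. x)" unfolding path_def by (rule continuous_on_const)
    moreover have "path_image (\<lambda>t. x) \<subseteq> realization r par" using x unfolding path_image_def by auto
    moreover have "mono_on {0..1} (f \<circ> (\<lambda>t. x))" by (intro mono_onI) simp
    ultimately show ?thesis using x True unfolding prec_def pathstart_def pathfinish_def by blast
  next
    case False
    obtain \<gamma> s where g: "arc \<gamma>" "pathstart \<gamma> = x" "pathfinish \<gamma> = 0" "path_image \<gamma> \<subseteq> realization r par"
       "0 < s" "s \<le> 1" "\<gamma> s = y" using arc_through[OF rt x y le False] by blast
    have sm: "strict_mono_on {0..1} (f \<circ> \<gamma>)" using arc_mono[OF g(1,4,3)] .
    have s01: "s \<in> {0..1}" "(0::real) \<in> {0..1}" using g(5,6) by auto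
    have "path (subpath 0 s \<gamma>)" using arc_imp_path[OF g(1)] s01 by simp
    moreover have "path_image (subpath 0 s \<gamma>) \<subseteq> realization r par"
      using path_image_subpath_subset[OF s01(2) s01(1), of \<gamma>] g(4) by blast
    moreover have "pathstart (subpath 0 s \<gamma>) = x" using g(2) by (simp add: pathstart_def subpath_def)
    moreover have "pathfinish (subpath 0 s \<gamma>) = y" using g(7) by (simp add: pathfinish_def subpath_def)
    moreover have "mono_on {0..1} (f \<circ> subpath 0 s \<gamma>)"
    proof (intro mono_onI)
      fix a b :: real assume ab: "a \<in> {0..1}" "b \<in> {0..1}" "a \<le> b"
      have "s * a \<in> {0..1}" "s * b \<in> {0..1}" using ab g(5,6) by (auto simp: mult_le_one)
      moreover have "s * a \<le> s * b" using ab g(5) by simp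
      ultimately have "(f \<circ> \<gamma>) (s * a) \<le> (f \<circ> \<gamma>) (s * b)" using strict_mono_on_leD[OF sm] by blast
      then show "(f \<circ> subpath 0 s \<gamma>) a \<le> (f \<circ> subpath 0 s \<gamma>) b" by (simp add: subpath_def)
    qed
    ultimately show ?thesis using x y unfolding prec_def by blast
  qed
qed

lemma lca_eq:
  assumes a: "a \<in> realization r par" and b: "b \<in> realization r par"
  shows "lca r par f a b = vinf a b"
  unfolding lca_def
proof (rule the_equality)
  have z: "vinf a b \<in> realization r par" using vinf_in_R[OF rt a b] .
  have za: "cle (vinf a b) a" by (auto simp: cle_def vinf_def)
  have zb: "cle (vinf a b) b" by (auto simp: cle_def vinf_def)
  show "prec r par f a (vinf a b) \<and> prec r par f b (vinf a b) \<and>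
    (\<forall>w. prec r par f a w \<and> prec r par f b w \<longrightarrow> prec r par f (vinf a b) w)"
    using z za zb a b unfolding prec_iff by (auto simp: cle_def vinf_def)
next
  fix z assume "prec r par f a z \<and> prec r par f b z \<and>
    (\<forall>w. prec r par f a w \<and> prec r par f b w \<longrightarrow> prec r par f z w)"
  then have h: "z \<in> realization r par" "cle z a" "cle z b"
     "\<forall>w. w \<in> realization r par \<and> cle w a \<and> cle w b \<longrightarrow> cle w z" unfolding prec_iff using a b by auto
  have z: "vinf a b \<in> realization r par" using vinf_in_R[OF rt a b] .
  have "cle (vinf a b) z" using h(4) z by (auto simp: cle_def vinf_def)
  moreover have "cle z (vinf a b)" using h(2,3) by (auto simp: cle_def vinf_def)
  ultimately show "z = vinf a b" by (auto simp: cle_def vec_eq_iff intro: order_antisym)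
qed

end

lemma comp_sep:
  fixes S :: "real set"
  assumes "a \<in> S" "b \<in> S" "a < m" "m < b" "m \<notin> S"
  shows "connected_component_set S a \<noteq> connected_component_set S b"
proof
  assume eq: "connected_component_set S a = connected_component_set S b"
  have "b \<in> connected_component_set S b" using connected_component_refl[OF assms(2)] by simp
  then have bC: "b \<in> connected_component_set S a" using eq by simp
  have aC: "a \<in> connected_component_set S a" using connected_component_refl[OF assms(1)] by simp
  have "{a..b} \<subseteq> connected_component_set S a"
    by (rule connected_contains_Icc[OF connected_connected_component aC bC])
  moreover have "m \<in> {a..b}" using assms(3,4) by simp
  ultimately have "m \<in> connected_component_set S a" by blast
  then have "m \<in> S" using connected_component_subset by blast
  then show False using assms(5) by simp
qed


lemma four_components:
  fixes S :: "real set"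
  assumes "s1 \<in> S" "s2 \<in> S" "s3 \<in> S" "s4 \<in> S" "m1 \<notin> S" "m2 \<notin> S" "m3 \<notin> S"
    "s1 < m1" "m1 < s2" "s2 < m2" "m2 < s3" "s3 < m3" "m3 < s4"
    and fin: "finite (components S)"
  shows "4 \<le> card (components S)"
proof -
  let ?C = "connected_component_set S"
  have o: "s1 < m2" "s1 < m3" "s2 < m3" "m1 < s3" "m1 < s4" "m2 < s4" using assms(8-13) by linarith+
  have d: "?C s1 \<noteq> ?C s2" "?C s1 \<noteq> ?C s3" "?C s1 \<noteq> ?C s4" "?C s2 \<noteq> ?C s3" "?C s2 \<noteq> ?C s4" "?C s3 \<noteq> ?C s4"
    using comp_sep[of s1 S s2 m1] comp_sep[of s1 S s3 m1] comp_sep[of s1 S s4 m1]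
      comp_sep[of s2 S s3 m2] comp_sep[of s2 S s4 m2] comp_sep[of s3 S s4 m3] assms(1-13) o
    by blast+
  have sub: "{?C s1, ?C s2, ?C s3, ?C s4} \<subseteq> components S" using componentsI assms(1-4) by blast
  have "card {?C s1, ?C s2, ?C s3, ?C s4} = 4" using d by simp
  then show ?thesis using card_mono[OF fin sub] by simp
qed

theorem lemma11:
  fixes r :: "'v::finite" and par :: "'v \<Rightarrow> 'v" and f :: "real^'v \<Rightarrow> ereal"
    and le :: "real \<Rightarrow> real^'v \<Rightarrow> real^'v \<Rightarrow> bool"
    and \<tau> :: "real \<Rightarrow> real^'v" and t1 t2 :: real
  assumes "merge_tree r par f"
    and "layer_order r par f le"
    and "partial_in_order r par f le \<tau>"
    and "0 \<le> t1" and "t1 \<le> t2" and "t2 \<le> 1"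
  shows "\<forall>t\<in>{t1..t2}. \<tau> t \<in> subtree r par f (lca r par f (\<tau> t1) (\<tau> t2))"
proof
  note mt = assms(1)
  have rt: "rooted_tree r par" using rt[OF mt] .
  have cont: "continuous_on {0..1} \<tau>" and img: "\<tau> ` {0..1} \<subseteq> realization r par"
    and t0: "\<tau> 0 = 0" and t1': "\<tau> 1 = 0"
    and vis: "\<forall>x\<in>realization r par.
        int (visits \<tau> x) = int (down_degree r par x) + 1 - int (unvisited_degree r par f \<tau> x)"
    using assms(3) vtx_r[OF rt] unfolding partial_in_order_def by auto
  have inR: "\<And>s. 0 \<le> s \<Longrightarrow> s \<le> 1 \<Longrightarrow> \<tau> s \<in> realization r par" using img by auto
  have a: "\<tau> t1 \<in> realization r par" and b: "\<tau> t2 \<in> realization r par" using inR assms(4-6) by auto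
  define z where "z = vinf (\<tau> t1) (\<tau> t2)"
  have lz: "lca r par f (\<tau> t1) (\<tau> t2) = z" unfolding z_def using lca_eq[OF mt a b] .
  have zR: "z \<in> realization r par" unfolding z_def using vinf_in_R[OF rt a b] .
  fix t assume t: "t \<in> {t1..t2}"
  have tt: "t1 \<le> t" "t \<le> t2" using t by auto
  have yR: "\<tau> t \<in> realization r par" using inR tt assms(4-6) by auto
  have "cle z (\<tau> t)" unfolding cle_def
  proof (rule ccontr)
    assume "\<not> (\<forall>w. z $ w \<le> \<tau> t $ w)"
    then obtain u where u: "\<tau> t $ u < z $ u" by (meson not_le)
    define c where "c = (\<tau> t $ u + z $ u) / 2"
    have za: "z $ u \<le> \<tau> t1 $ u" and zb: "z $ u \<le> \<tau> t2 $ u" unfolding z_def vinf_def by auto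
    have c: "0 < c" "c < 1" "\<tau> t $ u < c" "c < z $ u" using u R_range[OF rt yR, of u] R_range[OF rt zR, of u]
      unfolding c_def by auto
    define g where "g = (\<lambda>s. \<tau> s $ u)"
    have gc: "\<And>a b. 0 \<le> a \<Longrightarrow> b \<le> 1 \<Longrightarrow> continuous_on {a..b} g"
    proof -
      fix a b :: real assume "0 \<le> a" "b \<le> 1"
      then have "continuous_on {a..b} \<tau>" using continuous_on_subset[OF cont] by simp
      then show "continuous_on {a..b} g" unfolding g_def by (rule continuous_on_component)
    qed
    have g0: "g 0 = 0" and g1: "g 1 = 0" using t0 t1' unfolding g_def by auto
    have ga: "c < g t1" and gb: "c < g t2" and gt: "g t < c" using za zb c unfolding g_def by auto
    obtain s1 where s1: "0 \<le> s1" "s1 \<le> t1" "g s1 = c"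
      using IVT'[of g 0 c t1, OF _ _ _ gc] g0 ga c assms(4) tt assms(6) by auto
    obtain s2 where s2: "t1 \<le> s2" "s2 \<le> t" "g s2 = c"
      using IVT2'[of g t c t1, OF _ _ _ gc] ga gt tt assms(4) assms(6) by auto
    obtain s3 where s3: "t \<le> s3" "s3 \<le> t2" "g s3 = c"
      using IVT'[of g t c t2, OF _ _ _ gc] gb gt tt assms(4) assms(6) by auto
    obtain s4 where s4: "t2 \<le> s4" "s4 \<le> 1" "g s4 = c"
      using IVT2'[of g 1 c t2, OF _ _ _ gc] gb g1 c assms(4) tt assms(6) by auto
    define p where "p = emb r par u (1 - c)"
    define S where "S = {s \<in> {0..1}. \<tau> s = p}"
    have fr: "\<And>s. 0 \<le> s \<Longrightarrow> s \<le> 1 \<Longrightarrow> g s = c \<Longrightarrow> u \<noteq> r \<and> \<tau> s = p"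
    proof -
      fix s :: real assume s: "0 \<le> s" "s \<le> 1" "g s = c"
      have gs: "\<tau> s $ u = c" using s(3) unfolding g_def .
      have h1: "0 < \<tau> s $ u" "\<tau> s $ u < 1" using gs c(1,2) by simp_all
      note R = R_frac[OF rt inR[OF s(1,2)] h1]
      have "emb r par u (1 - \<tau> s $ u) = p" unfolding p_def gs ..
      then have "\<tau> s = p" using conjunct2[OF R] by (rule trans[rotated])
      then show "u \<noteq> r \<and> \<tau> s = p" using conjunct1[OF R] by (rule conjI[rotated])
    qed
    have inS: "s \<in> S" if "0 \<le> s" "s \<le> 1" "g s = c" for s
    proof -
      have "\<tau> s = p" using fr[OF that] by (rule conjunct2)
      then show ?thesis unfolding S_def using that(1,2) by simp
    qed
    have pu: "p $ u = c" unfolding p_def by (simp add: emb_nth[OF rt])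
    have notS: "s \<notin> S" if "g s \<noteq> c" for s
    proof
      assume "s \<in> S"
      then have "\<tau> s = p" unfolding S_def by simp
      then have "g s = c" unfolding g_def using pu by simp
      then show False using that by blast
    qed
    have s1R: "0 \<le> s1" "s1 \<le> 1" using s1 tt assms(4-6) by auto
    have ur: "u \<noteq> r" using fr[OF s1R s1(3)] by blast
    have pR: "p \<in> realization r par" unfolding p_def using emb_in_R[OF rt ur] c by simp
    have dd: "down_degree r par p = 1"
    proof -
      have "p \<notin> range (vtx r par)"
      proof
        assume "p \<in> range (vtx r par)"
        then obtain v where "p = vtx r par v" by blast
        moreover have "vtx r par v $ u = 0 \<or> vtx r par v $ u = 1" by (simp add: vtx_def emb_nth[OF rt])
        ultimately have "p $ u = 0 \<or> p $ u = 1" by simp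
        then show False using pu c by auto
      qed
      then show ?thesis unfolding down_degree_def by simp
    qed
    have ud: "unvisited_degree r par f \<tau> p \<le> 1"
    proof -
      have "{v. unvisited_planted r par f \<tau> p v} \<subseteq> {u}"
      proof
        fix v assume "v \<in> {v. unvisited_planted r par f \<tau> p v}"
        then have "planted_at r par p v" unfolding unvisited_planted_def by simp
        then obtain s where "p = emb r par v s" unfolding planted_at_def by blast
        then show "v \<in> {u}" using emb_frac[OF rt, of v s u] pu c by simp
      qed
      then have "card {v. unvisited_planted r par f \<tau> p v} \<le> card {u}" by (intro card_mono) auto
      then show ?thesis unfolding unvisited_degree_def by simp
    qed
    have "int (visits \<tau> p) = int (down_degree r par p) + 1 - int (unvisited_degree r par f \<tau> p)"
      using vis pR by (rule bspec)
    then have vv: "int (visits \<tau> p) = int 1 + 1 - int (unvisited_degree r par f \<tau> p)" by (simp only: dd)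
    have ud': "int (unvisited_degree r par f \<tau> p) \<le> 1" using ud by linarith
    have v12: "1 \<le> visits \<tau> p" "visits \<tau> p \<le> 2" using vv ud' by linarith+
    have vS: "visits \<tau> p = card (components S)" by (simp only: visits_def S_def)
    have c0: "card (components S) \<noteq> 0" using v12(1) unfolding vS by linarith
    have fin: "finite (components S)"
    proof (rule ccontr)
      assume "infinite (components S)"
      then have "card (components S) = 0" by (rule card.infinite)
      then show False using c0 by blast
    qed
    have s1S: "s1 \<in> S" by (rule inS) (use s1 assms(4-6) tt in auto)
    have s2S: "s2 \<in> S" by (rule inS) (use s2 assms(4-6) tt in auto)
    have s3S: "s3 \<in> S" by (rule inS) (use s3 assms(4-6) tt in auto)
    have s4S: "s4 \<in> S" by (rule inS) (use s4 assms(4-6) tt in auto)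
    have m1: "t1 \<notin> S" by (rule notS) (use ga in simp)
    have m2: "t \<notin> S" by (rule notS) (use gt in simp)
    have m3: "t2 \<notin> S" by (rule notS) (use gb in simp)
    have o1: "s1 < t1" using s1 ga by (cases "s1 = t1") auto
    have o2: "t1 < s2" using s2 ga by (cases "s2 = t1") auto
    have o3: "s2 < t" using s2 gt by (cases "s2 = t") auto
    have o4: "t < s3" using s3 gt by (cases "s3 = t") auto
    have o5: "s3 < t2" using s3 gb by (cases "s3 = t2") auto
    have o6: "t2 < s4" using s4 gb by (cases "s4 = t2") auto
    have "4 \<le> card (components S)"
      by (rule four_components[OF s1S s2S s3S s4S m1 m2 m3 o1 o2 o3 o4 o5 o6 fin])
    then show False using v12(2) unfolding vS by linarith
  qed
  then have "prec r par f (\<tau> t) z" using prec_iff[OF mt] yR zR by simp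
  then show "\<tau> t \<in> subtree r par f (lca r par f (\<tau> t1) (\<tau> t2))"
    unfolding lz subtree_def using yR by simp
qed

end
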